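(* For any $k\geq1$, $n\geq0$ and $\ell\geq0$, the number of $k$-packed matrices of size $n$ with exactly $\ell$ nonzero entries is $$\#\mathcal{P}_{k,n,\ell}=\sum_{0\leq i,j\leq n}(-1)^{i+j}\binom{n}{i}\binom{n}{j}\binom{ij}{\ell}k^{\ell}.$$
   Context: $A_k=\{0,1,\dots,k\}$. A $k$-packed matrix of size $n$ is an $n\times n$ matrix with entries in $A_k$ such that each row and each column contains at least one nonzero entry (the empty matrix is the unique one of size $0$). $\mathcal{P}_{k,n,\ell}$ is the set of $k$-packed matrices of size $n$ with exactly $\ell$ nonzero entries. Binomial coefficients $\binom{m}{\ell}$ are $0$ when $\ell>m$, and $\binom{0}{0}=1$. *)

theory Defs
  imports Main
begin

text \<open>An n x n matrix with entries in A_k = {0..k}, represented as a function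
  nat => nat => nat whose entries outside {0..<n} x {0..<n} are 0 (so that
  distinct functions correspond to distinct matrices).\<close>
definition matrices_Ak :: "nat \<Rightarrow> nat \<Rightarrow> (nat \<Rightarrow> nat \<Rightarrow> nat) set" where
  "matrices_Ak k n = {M. (\<forall>i j. M i j \<le> k) \<and> (\<forall>i j. (i \<ge> n \<or> j \<ge> n) \<longrightarrow> M i j = 0)}"

definition k_packed :: "nat \<Rightarrow> nat \<Rightarrow> (nat \<Rightarrow> nat \<Rightarrow> nat) \<Rightarrow> bool" where
  "k_packed k n M \<longleftrightarrow> M \<in> matrices_Ak k n
     \<and> (\<forall>i<n. \<exists>j<n. M i j \<noteq> 0) \<and> (\<forall>j<n. \<exists>i<n. M i j \<noteq> 0)"

definition num_nonzero :: "nat \<Rightarrow> (nat \<Rightarrow> nat \<Rightarrow> nat) \<Rightarrow> nat" where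
  "num_nonzero n M = card {(i, j). i < n \<and> j < n \<and> M i j \<noteq> 0}"

definition packed_set :: "nat \<Rightarrow> nat \<Rightarrow> nat \<Rightarrow> (nat \<Rightarrow> nat \<Rightarrow> nat) set" where
  "packed_set k n l = {M. k_packed k n M \<and> num_nonzero n M = l}"

end

theory Submission
  imports Defs "HOL-Library.FuncSet"
begin

lemma alt0:
  assumes "finite B" "B \<noteq> {}"
  shows "(\<Sum>T\<in>Pow B. (-1::int)^card T) = 0"
proof -
  obtain a where a: "a \<in> B" using assms(2) by blast
  define B' where "B' = B - {a}"
  have B: "B = insert a B'" "a \<notin> B'" using a unfolding B'_def by auto
  have fB': "finite B'" using assms(1) B by auto
  have inj: "inj_on (insert a) (Pow B')"
  proof (rule inj_onI)
    fix X Y assume "X \<in> Pow B'" "Y \<in> Pow B'" "insert a X = insert a Y"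
    moreover have "a \<notin> X" "a \<notin> Y" using B(2) calculation by auto
    ultimately show "X = Y" by (simp add: insert_ident)
  qed
  have disj: "Pow B' \<inter> insert a ` Pow B' = {}" using B(2) by auto
  have "(\<Sum>T\<in>Pow B. (-1::int)^card T) = (\<Sum>T\<in>Pow B'. (-1::int)^card T) + (\<Sum>T\<in>insert a ` Pow B'. (-1::int)^card T)"
    unfolding B(1) Pow_insert using fB' disj by (simp add: sum.union_disjoint)
  also have "(\<Sum>T\<in>insert a ` Pow B'. (-1::int)^card T) = (\<Sum>T\<in>Pow B'. (-1::int)^card (insert a T))"
    using inj by (simp add: sum.reindex)
  also have "\<dots> = (\<Sum>T\<in>Pow B'. - ((-1::int)^card T))"
  proof (rule sum.cong)
    fix T assume "T \<in> Pow B'"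
    then have "finite T" "a \<notin> T" using fB' B(2) finite_subset by auto
    then show "(-1::int)^card (insert a T) = - ((-1::int)^card T)" by simp
  qed simp
  finally show ?thesis by (simp add: sum_negf)
qed

lemma alt1:
  assumes "finite U" "A \<subseteq> U"
  shows "(\<Sum>R\<in>{R. A \<subseteq> R \<and> R \<subseteq> U}. (-1::int)^card (U - R)) = (if A = U then 1 else 0)"
proof -
  have img: "{R. A \<subseteq> R \<and> R \<subseteq> U} = (\<lambda>T. U - T) ` Pow (U - A)"
  proof
    show "{R. A \<subseteq> R \<and> R \<subseteq> U} \<subseteq> (\<lambda>T. U - T) ` Pow (U - A)"
    proof
      fix R assume "R \<in> {R. A \<subseteq> R \<and> R \<subseteq> U}"
      then have "R = U - (U - R)" "U - R \<in> Pow (U - A)" by auto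
      then show "R \<in> (\<lambda>T. U - T) ` Pow (U - A)" by blast
    qed
  qed (use assms in auto)
  have inj: "inj_on (\<lambda>T. U - T) (Pow (U - A))"
    by (rule inj_onI) (auto simp: set_eq_iff)
  have "(\<Sum>R\<in>{R. A \<subseteq> R \<and> R \<subseteq> U}. (-1::int)^card (U - R)) = (\<Sum>T\<in>Pow (U - A). (-1::int)^card (U - (U - T)))"
    unfolding img using inj by (simp add: sum.reindex)
  also have "\<dots> = (\<Sum>T\<in>Pow (U - A). (-1::int)^card T)"
  proof (rule sum.cong)
    fix T assume "T \<in> Pow (U - A)"
    then have "U - (U - T) = T" by auto
    then show "(-1::int)^card (U - (U - T)) = (-1)^card T" by simp
  qed simp
  also have "\<dots> = (if A = U then 1 else 0)"
  proof (cases "A = U")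
    case True then show ?thesis by simp
  next
    case False
    then have "U - A \<noteq> {}" using assms by auto
    moreover have "finite (U - A)" using assms by auto
    ultimately have "(\<Sum>T\<in>Pow (U - A). (-1::int)^card T) = 0" using alt0 by blast
    then show ?thesis using False by simp
  qed
  finally show ?thesis .
qed

lemma alt2:
  assumes "finite U" "A \<subseteq> U"
  shows "(\<Sum>R\<in>Pow U. if A \<subseteq> R then (-1::int)^card R else 0) = (if A = U then (-1)^card U else 0)"
proof -
  have "(\<Sum>R\<in>Pow U. if A \<subseteq> R then (-1::int)^card R else 0) = (\<Sum>R\<in>{R\<in>Pow U. A \<subseteq> R}. (-1::int)^card R)"
    by (rule sum.inter_filter[of "Pow U" "\<lambda>R. (-1::int)^card R" "\<lambda>R. A \<subseteq> R", symmetric]) (simp add: assms)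
  also have "{R\<in>Pow U. A \<subseteq> R} = {R. A \<subseteq> R \<and> R \<subseteq> U}" by auto
  also have "(\<Sum>R\<in>{R. A \<subseteq> R \<and> R \<subseteq> U}. (-1::int)^card R) = (\<Sum>R\<in>{R. A \<subseteq> R \<and> R \<subseteq> U}. (-1)^card U * (-1::int)^card (U - R))"
  proof (rule sum.cong)
    fix R assume R: "R \<in> {R. A \<subseteq> R \<and> R \<subseteq> U}"
    then have "finite R" "R \<subseteq> U" using assms finite_subset by auto
    then have c: "card U = card R + card (U - R)"
      using assms(1) by (simp add: card_Diff_subset card_mono)
    have "(-1::int)^card U * (-1)^card (U - R) = (-1)^card R * ((-1)^card (U-R) * (-1)^card (U-R))"
      unfolding c power_add by (simp add: algebra_simps)
    also have "\<dots> = (-1)^card R" by (simp flip: power_add)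
    finally show "(-1::int)^card R = (-1)^card U * (-1)^card (U - R)" by simp
  qed simp
  also have "\<dots> = (-1)^card U * (if A = U then 1 else 0)"
    by (simp only: sum_distrib_left[symmetric] alt1[OF assms])
  finally show ?thesis by simp
qed

lemma group_card:
  assumes "finite U"
  shows "(\<Sum>R\<in>Pow U. h (card R)) = (\<Sum>i\<le>card U. of_nat (card U choose i) * (h i :: 'a::comm_ring_1))"
proof -
  have "(\<Sum>R\<in>Pow U. h (card R)) = (\<Sum>i\<le>card U. \<Sum>R\<in>{R. R \<in> Pow U \<and> card R = i}. h (card R))"
    by (rule sum.group[symmetric]) (use assms card_mono in auto)
  also have "\<dots> = (\<Sum>i\<le>card U. of_nat (card U choose i) * h i)"
  proof (rule sum.cong)
    fix i
    have "(\<Sum>R\<in>{R. R \<in> Pow U \<and> card R = i}. h (card R)) = (\<Sum>R\<in>{R. R \<subseteq> U \<and> card R = i}. h i)"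
      by (rule sum.cong) auto
    also have "\<dots> = of_nat (card U choose i) * h i"
      using n_subsets[OF assms, of i] by simp
    finally show "(\<Sum>R\<in>{R. R \<in> Pow U \<and> card R = i}. h (card R)) = of_nat (card U choose i) * h i" .
  qed simp
  finally show ?thesis .
qed


lemma comb:
  fixes n l :: nat
  defines "U \<equiv> {..<n}"
  shows "int (card {S. S \<subseteq> U \<times> U \<and> card S = l \<and> fst ` S = U \<and> snd ` S = U}) =
    (\<Sum>i\<le>n. \<Sum>j\<le>n. (-1) ^ (i + j) * int (n choose i) * int (n choose j) * int ((i * j) choose l))"
proof -
  define Q where "Q = {S. S \<subseteq> U \<times> U \<and> card S = l}"
  have fU: "finite U" and cU: "card U = n" unfolding U_def by auto
  have fQ: "finite Q" unfolding Q_def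
    by (rule finite_subset[of _ "Pow (U \<times> U)"]) (use fU in auto)
  have step1: "int (card {S. S \<subseteq> R \<times> C \<and> card S = l}) = (\<Sum>S\<in>Q. if fst ` S \<subseteq> R \<and> snd ` S \<subseteq> C then 1 else 0)"
    if R: "R \<in> Pow U" and C: "C \<in> Pow U" for R C
  proof -
    have e: "{S. S \<subseteq> R \<times> C \<and> card S = l} = {S\<in>Q. fst ` S \<subseteq> R \<and> snd ` S \<subseteq> C}"
      using R C unfolding Q_def by force
    have "int (card {S\<in>Q. fst ` S \<subseteq> R \<and> snd ` S \<subseteq> C}) = (\<Sum>S\<in>{S\<in>Q. fst ` S \<subseteq> R \<and> snd ` S \<subseteq> C}. 1)"
      by simp
    also have "\<dots> = (\<Sum>S\<in>Q. if fst ` S \<subseteq> R \<and> snd ` S \<subseteq> C then 1 else 0)"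
      by (rule sum.inter_filter[OF fQ])
    finally show ?thesis unfolding e .
  qed
  have ch: "card {S. S \<subseteq> R \<times> C \<and> card S = l} = (card R * card C) choose l"
    if R: "R \<in> Pow U" and C: "C \<in> Pow U" for R C
  proof -
    have "finite R" "finite C" using R C fU finite_subset by auto
    then show ?thesis using n_subsets[of "R \<times> C" l] by (simp add: card_cartesian_product)
  qed
  define T where "T = (\<Sum>R\<in>Pow U. \<Sum>C\<in>Pow U. (-1::int)^(card R + card C) * int ((card R * card C) choose l))"
  have "T = (\<Sum>R\<in>Pow U. \<Sum>j\<le>n. int (n choose j) * ((-1::int)^(card R + j) * int ((card R * j) choose l)))"
    unfolding T_def
    by (rule sum.cong[OF refl], subst group_card[OF fU], simp add: cU)
  also have "\<dots> = (\<Sum>i\<le>n. int (n choose i) * (\<Sum>j\<le>n. int (n choose j) * ((-1::int)^(i + j) * int ((i * j) choose l))))"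
    by (subst group_card[OF fU], simp add: cU)
  also have "\<dots> = (\<Sum>i\<le>n. \<Sum>j\<le>n. (-1) ^ (i + j) * int (n choose i) * int (n choose j) * int ((i * j) choose l))"
    by (rule sum.cong[OF refl], simp add: sum_distrib_left, rule sum.cong[OF refl], simp add: algebra_simps)
  finally have T1: "T = (\<Sum>i\<le>n. \<Sum>j\<le>n. (-1) ^ (i + j) * int (n choose i) * int (n choose j) * int ((i * j) choose l))" .
  define P where "P S \<longleftrightarrow> fst ` S \<subseteq> U" for S :: "(nat \<times> nat) set"
  have "T = (\<Sum>R\<in>Pow U. \<Sum>C\<in>Pow U. \<Sum>S\<in>Q. (-1::int)^(card R + card C) * (if fst ` S \<subseteq> R \<and> snd ` S \<subseteq> C then 1 else 0))"
    unfolding T_def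
    by (rule sum.cong[OF refl], rule sum.cong[OF refl], simp add: ch[symmetric] step1 sum_distrib_left)
  also have "\<dots> = (\<Sum>R\<in>Pow U. \<Sum>S\<in>Q. \<Sum>C\<in>Pow U. (-1::int)^(card R + card C) * (if fst ` S \<subseteq> R \<and> snd ` S \<subseteq> C then 1 else 0))"
    by (rule sum.cong[OF refl], rule sum.swap)
  also have "\<dots> = (\<Sum>S\<in>Q. \<Sum>R\<in>Pow U. \<Sum>C\<in>Pow U. (-1::int)^(card R + card C) * (if fst ` S \<subseteq> R \<and> snd ` S \<subseteq> C then 1 else 0))"
    by (rule sum.swap)
  also have "\<dots> = (\<Sum>S\<in>Q. if fst ` S = U \<and> snd ` S = U then 1 else 0)"
  proof (rule sum.cong[OF refl])
    fix S assume S: "S \<in> Q"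
    then have s1: "fst ` S \<subseteq> U" and s2: "snd ` S \<subseteq> U" unfolding Q_def by auto
    have "(\<Sum>R\<in>Pow U. \<Sum>C\<in>Pow U. (-1::int)^(card R + card C) * (if fst ` S \<subseteq> R \<and> snd ` S \<subseteq> C then 1 else 0))
      = (\<Sum>R\<in>Pow U. if fst ` S \<subseteq> R then (-1::int)^card R else 0) * (\<Sum>C\<in>Pow U. if snd ` S \<subseteq> C then (-1::int)^card C else 0)"
      unfolding sum_product by (rule sum.cong[OF refl], rule sum.cong[OF refl], simp add: power_add)
    also have "\<dots> = (if fst ` S = U then (-1)^card U else 0) * (if snd ` S = U then (-1)^card U else 0)"
      by (simp only: alt2[OF fU s1] alt2[OF fU s2])
    also have "\<dots> = (if fst ` S = U \<and> snd ` S = U then 1 else 0)"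
      by (simp flip: power_add)
    finally show "(\<Sum>R\<in>Pow U. \<Sum>C\<in>Pow U. (-1::int)^(card R + card C) * (if fst ` S \<subseteq> R \<and> snd ` S \<subseteq> C then 1 else 0))
      = (if fst ` S = U \<and> snd ` S = U then 1 else 0)" .
  qed
  also have "\<dots> = (\<Sum>S\<in>{S\<in>Q. fst ` S = U \<and> snd ` S = U}. 1)"
    by (rule sum.inter_filter[OF fQ, symmetric])
  also have "\<dots> = int (card {S. S \<subseteq> U \<times> U \<and> card S = l \<and> fst ` S = U \<and> snd ` S = U})"
    by (simp add: Q_def conj_assoc)
  finally show ?thesis using T1 by simp
qed

definition supp :: "nat \<Rightarrow> (nat \<Rightarrow> nat \<Rightarrow> nat) \<Rightarrow> (nat \<times> nat) set" where
  "supp n M = {(i, j). i < n \<and> j < n \<and> M i j \<noteq> 0}"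

lemma cardV:
  assumes S: "S \<subseteq> {..<n} \<times> {..<n}"
  shows "finite {M \<in> matrices_Ak k n. supp n M = S} \<and> card {M \<in> matrices_Ak k n. supp n M = S} = k ^ card S"
proof -
  define g where "g f = (\<lambda>i j. if (i, j) \<in> S then f (i, j) else 0)" for f :: "nat \<times> nat \<Rightarrow> nat"
  define h where "h M = restrict (\<lambda>p. M (fst p) (snd p)) S" for M :: "nat \<Rightarrow> nat \<Rightarrow> nat"
  define A where "A = PiE S (\<lambda>_. {1..k})"
  define B where "B = {M \<in> matrices_Ak k n. supp n M = S}"
  have fS: "finite S" using S finite_subset by blast
  have bij: "bij_betw g A B"
  proof (rule bij_betw_byWitness[where f'=h])
    show "\<forall>a\<in>A. h (g a) = a"
      unfolding A_def by (auto simp: h_def g_def fun_eq_iff PiE_def extensional_def)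
    show "\<forall>a'\<in>B. g (h a') = a'"
    proof
      fix M assume "M \<in> B"
      then have M: "M \<in> matrices_Ak k n" "supp n M = S" unfolding B_def by auto
      show "g (h M) = M"
      proof (intro ext)
        fix i j
        show "g (h M) i j = M i j"
        proof (cases "(i, j) \<in> S")
          case True then show ?thesis by (simp add: g_def h_def)
        next
          case False
          then have "M i j = 0" using M unfolding supp_def matrices_Ak_def by auto
          then show ?thesis using False by (simp add: g_def)
        qed
      qed
    qed
    show "g ` A \<subseteq> B"
    proof
      fix M assume "M \<in> g ` A"
      then obtain f where f: "f \<in> A" "M = g f" by auto
      have "M \<in> matrices_Ak k n" using f S unfolding matrices_Ak_def A_def g_def by (auto simp: PiE_def Pi_def)
      moreover have "supp n M = S" using f S unfolding supp_def A_def g_def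
        by (force simp: PiE_def Pi_def)
      ultimately show "M \<in> B" unfolding B_def by auto
    qed
    show "h ` B \<subseteq> A"
    proof
      fix f assume "f \<in> h ` B"
      then obtain M where M: "M \<in> B" "f = h M" by auto
      then show "f \<in> A" unfolding A_def B_def h_def supp_def matrices_Ak_def
        by (auto simp: PiE_def Pi_def Suc_le_eq)
    qed
  qed
  have fA: "finite A" unfolding A_def using fS by (simp add: finite_PiE)
  have cA: "card A = k ^ card S" unfolding A_def using fS by (simp add: card_PiE)
  show ?thesis using bij fA cA unfolding B_def[symmetric]
    by (metis bij_betw_finite bij_betw_same_card)
qed

theorem proposition1p2:
  fixes k n l :: nat
  assumes "k \<ge> 1"
  shows "int (card (packed_set k n l)) =
    (\<Sum>i\<le>n. \<Sum>j\<le>n. (-1) ^ (i + j) * int (n choose i) * int (n choose j)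
        * int ((i * j) choose l) * int k ^ l)"
proof -
  define U where "U = {..<n}"
  define P where "P = {S. S \<subseteq> U \<times> U \<and> card S = l \<and> fst ` S = U \<and> snd ` S = U}"
  define V where "V S = {M \<in> matrices_Ak k n. supp n M = S}" for S
  have eq: "packed_set k n l = (\<Union>S\<in>P. V S)"
  proof
    show "packed_set k n l \<subseteq> (\<Union>S\<in>P. V S)"
    proof
      fix M assume "M \<in> packed_set k n l"
      then have M: "M \<in> matrices_Ak k n" "\<forall>i<n. \<exists>j<n. M i j \<noteq> 0" "\<forall>j<n. \<exists>i<n. M i j \<noteq> 0"
        "card (supp n M) = l"
        unfolding packed_set_def k_packed_def num_nonzero_def supp_def by auto
      have "fst ` supp n M = U"
      proof
        show "fst ` supp n M \<subseteq> U" unfolding supp_def U_def by auto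
        show "U \<subseteq> fst ` supp n M"
        proof
          fix i assume "i \<in> U"
          then obtain j where "j < n" "M i j \<noteq> 0" "i < n" using M(2) unfolding U_def by auto
          then have "(i, j) \<in> supp n M" unfolding supp_def by auto
          then show "i \<in> fst ` supp n M" by force
        qed
      qed
      moreover have "snd ` supp n M = U"
      proof
        show "snd ` supp n M \<subseteq> U" unfolding supp_def U_def by auto
        show "U \<subseteq> snd ` supp n M"
        proof
          fix j assume "j \<in> U"
          then obtain i where "i < n" "M i j \<noteq> 0" "j < n" using M(3) unfolding U_def by auto
          then have "(i, j) \<in> supp n M" unfolding supp_def by auto
          then show "j \<in> snd ` supp n M" by force
        qed
      qed
      moreover have "supp n M \<subseteq> U \<times> U" unfolding supp_def U_def by auto
      ultimately have "supp n M \<in> P" using M(4) unfolding P_def by auto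
      moreover have "M \<in> V (supp n M)" using M(1) unfolding V_def by auto
      ultimately show "M \<in> (\<Union>S\<in>P. V S)" by blast
    qed
    show "(\<Union>S\<in>P. V S) \<subseteq> packed_set k n l"
    proof
      fix M assume "M \<in> (\<Union>S\<in>P. V S)"
      then obtain S where S: "S \<in> P" "M \<in> V S" by auto
      then have M: "M \<in> matrices_Ak k n" "supp n M = S" unfolding V_def by auto
      have r: "\<exists>j<n. M i j \<noteq> 0" if "i < n" for i
      proof -
        have "i \<in> fst ` S" using S(1) that unfolding P_def U_def by auto
        then obtain j where "(i, j) \<in> S" by force
        then show ?thesis using M(2) unfolding supp_def by auto
      qed
      have c: "\<exists>i<n. M i j \<noteq> 0" if "j < n" for j
      proof -
        have "j \<in> snd ` S" using S(1) that unfolding P_def U_def by auto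
        then obtain i where "(i, j) \<in> S" by force
        then show ?thesis using M(2) unfolding supp_def by auto
      qed
      have "num_nonzero n M = l" using M(2) S(1) unfolding num_nonzero_def P_def supp_def[symmetric]
        by (simp add: supp_def)
      then show "M \<in> packed_set k n l" using M(1) r c unfolding packed_set_def k_packed_def by auto
    qed
  qed
  have fP: "finite P" unfolding P_def U_def
    by (rule finite_subset[of _ "Pow ({..<n} \<times> {..<n})"]) auto
  have VS: "finite (V S) \<and> card (V S) = k ^ card S" if "S \<in> P" for S
    using cardV[of S n k] that unfolding P_def U_def V_def by auto
  have "card (packed_set k n l) = (\<Sum>S\<in>P. card (V S))"
    unfolding eq by (rule card_UN_disjoint[OF fP]) (use VS in \<open>auto simp: V_def\<close>)
  also have "\<dots> = (\<Sum>S\<in>P. k ^ l)" by (rule sum.cong[OF refl]) (use VS in \<open>auto simp: P_def\<close>)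
  also have "\<dots> = card P * k ^ l" by simp
  finally have "int (card (packed_set k n l)) = int (card P) * int k ^ l" by simp
  also have "\<dots> = (\<Sum>i\<le>n. \<Sum>j\<le>n. (-1) ^ (i + j) * int (n choose i) * int (n choose j)
        * int ((i * j) choose l)) * int k ^ l"
    unfolding P_def U_def by (simp only: comb)
  also have "\<dots> = (\<Sum>i\<le>n. \<Sum>j\<le>n. (-1) ^ (i + j) * int (n choose i) * int (n choose j)
        * int ((i * j) choose l) * int k ^ l)"
    by (simp add: sum_distrib_right)
  finally show ?thesis .
qed

end
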